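(* Let $\alpha\in\mathrm{relint}(\Omega)$ and $L_\alpha(x)=1-\min_ix_i/\alpha_i$. Then: 1. $L_\alpha(x)\ge0$ for all $x\in\Omega$, and $L_\alpha(x)=0$ if and only if $x=\alpha$. 2. $|L_\alpha(x_1)-L_\alpha(x_2)|\le\frac{1}{\min_i\alpha_i}\|x_1-x_2\|_\infty$ for all $x_1,x_2\in\Omega$. 3. For every fluid sample path $(\bar A,\bar X)$ (under any stationary policy) and every regular point $t$, $\frac{d}{dt}L_\alpha(\bar X[t])\le\frac{1}{\min_i\alpha_i}$.
   Context: $\Omega$ is the probability simplex in $\mathbb R^n$, and $\mathrm{relint}(\Omega)$ consists of its points with positive coordinates. Model for item 3: $K$ units move among supply locations $V_S=\{1,\dots,n\}$. In each slot exactly one customer arrives (i.i.d. types $(j',k)$, with origin $j'$ in a finite set $V_D$ and destination $k\in V_S$). Either it is served by moving one unit from a compatible location $i$ to $k$, or it is dropped, in which case the state is unchanged. Fluid sample paths: with $\bar A^K[t]=\frac1K\mathbf A^K[Kt]$ (scaled cumulative arrivals by type) and $\bar X^{K,U}[t]=\frac1K\mathbf X^{K,U}[Kt]$ (linearly interpolated), a pair $(\bar A,\bar X)$ on $[0,T]$ is an FSP under policy $U$ if some sequence of realizable scaled arrival paths, scaled initial states, and resulting state paths has a subsequence converging uniformly to $(\bar A,\bar X[0],\bar X)$. A time $t$ is regular if the FSP is differentiable at $t$. *)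

theory Defs
  imports "HOL-Analysis.Analysis" "HOL-Probability.Probability_Mass_Function"
begin

definition prob_simplex :: "(real^'n) set" where
  "prob_simplex = {x. (\<forall>i. 0 \<le> x $ i) \<and> (\<Sum>i\<in>UNIV. x $ i) = 1}"

definition relint_prob_simplex :: "(real^'n) set" where
  "relint_prob_simplex = {x. x \<in> prob_simplex \<and> (\<forall>i. 0 < x $ i)}"

definition min_coord :: "real^'n \<Rightarrow> real" where
  "min_coord a = Min (range (\<lambda>i. a $ i))"

definition L_alpha :: "real^'n \<Rightarrow> real^'n \<Rightarrow> real" where
  "L_alpha a x = 1 - Min (range (\<lambda>i. x $ i / a $ i))"

text \<open>Supply locations: the finite type 'n.  Demand origins: the finite type 'd.
  A customer type is a pair (origin, destination) :: 'd \<times> 'n.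
  cmp i j: supply location i is compatible with origin j.
  A stationary policy U maps (K, current state, arriving type) to the location
  serving the customer (Some i) or to dropping it (None).\<close>

type_synonym ('n,'d) policy = "nat \<Rightarrow> ('n \<Rightarrow> nat) \<Rightarrow> ('d \<times> 'n) \<Rightarrow> 'n option"

definition step :: "('n \<Rightarrow> 'd \<Rightarrow> bool) \<Rightarrow> ('n,'d) policy \<Rightarrow> nat \<Rightarrow> ('n \<Rightarrow> nat)
    \<Rightarrow> ('d \<times> 'n) \<Rightarrow> ('n \<Rightarrow> nat)" where
  "step cmp U K x c =
     (case U K x c of
        None \<Rightarrow> x
      | Some i \<Rightarrow> (if cmp i (fst c) \<and> 0 < x i
                   then (let y = x(i := x i - 1) in y(snd c := y (snd c) + 1))
                   else x))"

primrec state_path :: "('n \<Rightarrow> 'd \<Rightarrow> bool) \<Rightarrow> ('n,'d) policy \<Rightarrow> nat \<Rightarrow> ('n \<Rightarrow> nat)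
    \<Rightarrow> (nat \<Rightarrow> 'd \<times> 'n) \<Rightarrow> nat \<Rightarrow> ('n \<Rightarrow> nat)" where
  "state_path cmp U K x0 \<omega> 0 = x0"
| "state_path cmp U K x0 \<omega> (Suc m) =
     step cmp U K (state_path cmp U K x0 \<omega> m) (\<omega> m)"

definition arrivals :: "(nat \<Rightarrow> 'd \<times> 'n) \<Rightarrow> nat \<Rightarrow> ('d \<times> 'n) \<Rightarrow> nat" where
  "arrivals \<omega> m c = card {s. s < m \<and> \<omega> s = c}"

definition scaled_arrivals :: "nat \<Rightarrow> (nat \<Rightarrow> 'd::finite \<times> 'n::finite) \<Rightarrow> real \<Rightarrow> real^('d \<times> 'n)" where
  "scaled_arrivals K \<omega> t = (\<chi> c. real (arrivals \<omega> (nat \<lfloor>real K * t\<rfloor>) c) / real K)"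

definition scaled_state :: "('n::finite \<Rightarrow> 'd \<Rightarrow> bool) \<Rightarrow> ('n,'d) policy \<Rightarrow> nat \<Rightarrow> ('n \<Rightarrow> nat)
    \<Rightarrow> (nat \<Rightarrow> 'd \<times> 'n) \<Rightarrow> real \<Rightarrow> real^'n" where
  "scaled_state cmp U K x0 \<omega> t =
     (let m = nat \<lfloor>real K * t\<rfloor>; \<theta> = real K * t - of_int \<lfloor>real K * t\<rfloor> in
      (\<chi> i. ((1 - \<theta>) * real (state_path cmp U K x0 \<omega> m i)
              + \<theta> * real (state_path cmp U K x0 \<omega> (Suc m) i)) / real K))"

definition unif_conv_on :: "real set \<Rightarrow> (nat \<Rightarrow> real \<Rightarrow> real^'a) \<Rightarrow> (real \<Rightarrow> real^'a) \<Rightarrow> bool" where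
  "unif_conv_on S f g \<longleftrightarrow>
     (\<forall>\<epsilon>>0. \<forall>\<^sub>F r in sequentially. \<forall>t\<in>S. infnorm (f r t - g t) < \<epsilon>)"

text \<open>Fluid sample path on [0,T] under policy U, with i.i.d. arrival types
  distributed according to p: there are scales K_r \<rightarrow> \<infinity> (a subsequence),
  realizable arrival sequences (all types in the support of p), initial states
  with K_r units, such that scaled arrivals, scaled initial states and scaled
  state paths converge uniformly.\<close>
definition is_FSP :: "('d::finite \<times> 'n::finite) pmf \<Rightarrow> ('n \<Rightarrow> 'd \<Rightarrow> bool) \<Rightarrow> ('n,'d) policy \<Rightarrow> real
    \<Rightarrow> (real \<Rightarrow> real^('d \<times> 'n)) \<Rightarrow> (real \<Rightarrow> real^'n) \<Rightarrow> bool" where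
  "is_FSP p cmp U T Abar Xbar \<longleftrightarrow>
     (\<exists>Ks :: nat \<Rightarrow> nat. \<exists>\<omega>s :: nat \<Rightarrow> nat \<Rightarrow> 'd \<times> 'n. \<exists>x0s :: nat \<Rightarrow> 'n \<Rightarrow> nat.
        strict_mono Ks \<and> (\<forall>r. 0 < Ks r) \<and>
        (\<forall>r m. \<omega>s r m \<in> set_pmf p) \<and>
        (\<forall>r. (\<Sum>i\<in>UNIV. x0s r i) = Ks r) \<and>
        unif_conv_on {0..T} (\<lambda>r. scaled_arrivals (Ks r) (\<omega>s r)) Abar \<and>
        ((\<lambda>r. (\<chi> i. real (x0s r i) / real (Ks r))) \<longlonglongrightarrow> Xbar 0) \<and>
        unif_conv_on {0..T} (\<lambda>r. scaled_state cmp U (Ks r) (x0s r) (\<omega>s r)) Xbar)"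

end

theory Submission
  imports Defs
begin

lemma min_shift:
  fixes f g :: "'n::finite \<Rightarrow> real"
  assumes "\<And>i. g i - c \<le> f i"
  shows "Min (range g) - c \<le> Min (range f)"
proof -
  have "\<forall>y\<in>range f. Min (range g) - c \<le> y"
  proof
    fix y assume "y \<in> range f"
    then obtain i where "y = f i" by auto
    moreover have "Min (range g) \<le> g i" by (intro Min_le) auto
    ultimately show "Min (range g) - c \<le> y" using assms[of i] by linarith
  qed
  then show ?thesis by (subst Min_ge_iff) auto
qed

lemma interp_mono:
  fixes a :: "nat \<Rightarrow> real" and u v :: real
  assumes step: "\<And>m. a m - 1 \<le> a (Suc m)" and "0 \<le> u" "u \<le> v"
  shows "(1 - (u - of_int \<lfloor>u\<rfloor>)) * a (nat \<lfloor>u\<rfloor>) + (u - of_int \<lfloor>u\<rfloor>) * a (Suc (nat \<lfloor>u\<rfloor>)) - (v - u)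
     \<le> (1 - (v - of_int \<lfloor>v\<rfloor>)) * a (nat \<lfloor>v\<rfloor>) + (v - of_int \<lfloor>v\<rfloor>) * a (Suc (nat \<lfloor>v\<rfloor>))"
proof -
  define b where "b m = a m + real m" for m
  have bm: "incseq b"
  proof (rule incseq_SucI)
    fix k show "b k \<le> b (Suc k)" using step[of k] by (simp add: b_def)
  qed
  define m where "m = nat \<lfloor>u\<rfloor>"
  define n where "n = nat \<lfloor>v\<rfloor>"
  define tu where "tu = u - of_int \<lfloor>u\<rfloor>"
  define tv where "tv = v - of_int \<lfloor>v\<rfloor>"
  have fu: "of_int \<lfloor>u\<rfloor> = real m" using assms m_def by simp
  have fv: "of_int \<lfloor>v\<rfloor> = real n" using assms n_def by simp
  have tu01: "0 \<le> tu" "tu < 1" unfolding tu_def by linarith+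
  have tv01: "0 \<le> tv" "tv < 1" unfolding tv_def by linarith+
  have mn: "m \<le> n" unfolding m_def n_def using assms by (simp add: floor_mono nat_mono)
  have G: "(1 - tu) * a m + tu * a (Suc m) - (v - u) \<le> (1 - tv) * a n + tv * a (Suc n)"
  proof (cases "m = n")
    case True
    have d: "v - u = tv - tu" using True fu fv tu_def tv_def by simp
    hence "0 \<le> tv - tu" using assms by simp
    hence "(tv - tu) * (a m - 1) \<le> (tv - tu) * a (Suc m)"
      using step by (intro mult_left_mono) auto
    hence "tv * a m - tu * a m - tv + tu \<le> tv * a (Suc m) - tu * a (Suc m)"
      by (simp add: algebra_simps)
    then show ?thesis unfolding d True[symmetric] by (simp add: algebra_simps)
  next
    case False
    hence mn': "Suc m \<le> n" using mn by simp
    have "b (Suc m) \<le> b n" using bm mn' by (simp add: incseq_def)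
    hence B: "a (Suc m) + real m + 1 \<le> a n + real n" by (simp add: b_def)
    have V: "a n - tv \<le> (1 - tv) * a n + tv * a (Suc n)"
    proof -
      have "tv * (a n - 1) \<le> tv * a (Suc n)" using step tv01 by (intro mult_left_mono) auto
      thus ?thesis by (simp add: algebra_simps)
    qed
    have U: "(1 - tu) * a m + tu * a (Suc m) \<le> a (Suc m) + 1 - tu"
    proof -
      have "(1 - tu) * a m \<le> (1 - tu) * (a (Suc m) + 1)" using step[of m] tu01
        by (intro mult_left_mono) auto
      thus ?thesis by (simp add: algebra_simps)
    qed
    have "v - u = real n + tv - real m - tu" using fu fv tu_def tv_def by simp
    then show ?thesis using B U V by linarith
  qed
  then show ?thesis unfolding tu_def tv_def m_def n_def .
qed

lemma step_ge: "real (x i) - 1 \<le> real (step cmp U K x c i)"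
  unfolding step_def by (cases "U K x c") (auto simp: Let_def)

lemma scaled_mono:
  assumes "0 < K" "0 \<le> t" "t \<le> s"
  shows "scaled_state cmp U K x0 \<omega> t $ i - (s - t) \<le> scaled_state cmp U K x0 \<omega> s $ i"
proof -
  define a where "a m = real (state_path cmp U K x0 \<omega> m i)" for m
  have st: "a m - 1 \<le> a (Suc m)" for m unfolding a_def using step_ge by simp
  have u0: "0 \<le> real K * t" using assms by simp
  have uv: "real K * t \<le> real K * s" using assms by simp
  note I = interp_mono[of a, OF st u0 uv]
  have K: "0 < real K" using assms by simp
  have e: "real K * s - real K * t = real K * (s - t)" by (simp add: algebra_simps)
  have "scaled_state cmp U K x0 \<omega> t $ i - (s - t) = ((1 - (real K * t - of_int \<lfloor>real K * t\<rfloor>)) * a (nat \<lfloor>real K * t\<rfloor>) + (real K * t - of_int \<lfloor>real K * t\<rfloor>) * a (Suc (nat \<lfloor>real K * t\<rfloor>)) - (real K * s - real K * t)) / real K"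
    unfolding scaled_state_def Let_def a_def e using K by (simp add: field_simps)
  also have "\<dots> \<le> ((1 - (real K * s - of_int \<lfloor>real K * s\<rfloor>)) * a (nat \<lfloor>real K * s\<rfloor>) + (real K * s - of_int \<lfloor>real K * s\<rfloor>) * a (Suc (nat \<lfloor>real K * s\<rfloor>))) / real K"
    using I K by (intro divide_right_mono) auto
  also have "\<dots> = scaled_state cmp U K x0 \<omega> s $ i"
    unfolding scaled_state_def Let_def a_def by simp
  finally show ?thesis .
qed

lemma conv_point:
  assumes "unif_conv_on S F X" "t \<in> S"
  shows "(\<lambda>r. F r t $ i) \<longlonglongrightarrow> X t $ i"
proof (rule LIMSEQ_I)
  fix e :: real assume "0 < e"
  with assms(1) have "\<forall>\<^sub>F r in sequentially. \<forall>t\<in>S. infnorm (F r t - X t) < e"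
    unfolding unif_conv_on_def by blast
  hence "\<forall>\<^sub>F r in sequentially. infnorm (F r t - X t) < e"
    by (rule eventually_mono) (use assms(2) in auto)
  then obtain N where N: "\<And>r. r \<ge> N \<Longrightarrow> infnorm (F r t - X t) < e"
    by (auto simp: eventually_sequentially)
  show "\<exists>no. \<forall>n\<ge>no. norm (F n t $ i - X t $ i) < e"
  proof (intro exI allI impI)
    fix n assume "N \<le> n"
    have "\<bar>(F n t - X t) $ i\<bar> \<le> infnorm (F n t - X t)" by (rule component_le_infnorm_cart)
    thus "norm (F n t $ i - X t $ i) < e" using N[OF \<open>N \<le> n\<close>] by simp
  qed
qed

lemma FSP_mono:
  assumes "is_FSP p cmp U T Abar Xbar" "0 \<le> t" "t \<le> s" "s \<le> T"
  shows "Xbar t $ i - (s - t) \<le> Xbar s $ i"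
proof -
  from assms(1) obtain Ks \<omega>s x0s where K: "\<And>r. 0 < Ks r"
    and C: "unif_conv_on {0..T} (\<lambda>r. scaled_state cmp U (Ks r) (x0s r) (\<omega>s r)) Xbar"
    unfolding is_FSP_def by blast
  have ts: "t \<in> {0..T}" "s \<in> {0..T}" using assms by auto
  show ?thesis
  proof (rule tendsto_le[OF trivial_limit_sequentially])
    show "(\<lambda>r. scaled_state cmp U (Ks r) (x0s r) (\<omega>s r) s $ i) \<longlonglongrightarrow> Xbar s $ i"
      by (rule conv_point[OF C ts(2)])
    show "(\<lambda>r. scaled_state cmp U (Ks r) (x0s r) (\<omega>s r) t $ i - (s - t)) \<longlonglongrightarrow> Xbar t $ i - (s - t)"
      by (intro tendsto_diff tendsto_const conv_point[OF C ts(1)])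
    show "\<forall>\<^sub>F r in sequentially. scaled_state cmp U (Ks r) (x0s r) (\<omega>s r) t $ i - (s - t)
        \<le> scaled_state cmp U (Ks r) (x0s r) (\<omega>s r) s $ i"
      by (intro always_eventually allI) (rule scaled_mono[OF K assms(2,3)])
  qed
qed

theorem lemma6:
  fixes \<alpha> :: "real^'n"
  assumes "\<alpha> \<in> relint_prob_simplex"
  shows "(\<forall>x\<in>prob_simplex. 0 \<le> L_alpha \<alpha> x \<and> (L_alpha \<alpha> x = 0 \<longleftrightarrow> x = \<alpha>))
    \<and> (\<forall>x1\<in>prob_simplex. \<forall>x2\<in>prob_simplex.
          \<bar>L_alpha \<alpha> x1 - L_alpha \<alpha> x2\<bar> \<le> infnorm (x1 - x2) / min_coord \<alpha>)
    \<and> (\<forall>(p :: ('d::finite \<times> 'n) pmf) cmp U T Abar Xbar t D.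
          is_FSP p cmp U T Abar Xbar \<and> t \<in> {0<..<T}
          \<and> Abar differentiable (at t) \<and> Xbar differentiable (at t)
          \<and> ((\<lambda>s. L_alpha \<alpha> (Xbar s)) has_real_derivative D) (at t)
          \<longrightarrow> D \<le> 1 / min_coord \<alpha>)"
proof -
  have apos: "\<And>i. 0 < \<alpha> $ i" and asum: "(\<Sum>i\<in>UNIV. \<alpha> $ i) = 1"
    using assms unfolding relint_prob_simplex_def prob_simplex_def by auto
  have mle: "\<And>i. min_coord \<alpha> \<le> \<alpha> $ i" unfolding min_coord_def by (intro Min_le) auto
  have "min_coord \<alpha> \<in> range (\<lambda>i. \<alpha> $ i)" unfolding min_coord_def by (intro Min_in) auto
  hence mpos: "0 < min_coord \<alpha>" using apos by auto
  have ratio_shift: "Min (range (\<lambda>i. y $ i / \<alpha> $ i)) - c / min_coord \<alpha> \<le> Min (range (\<lambda>i. x $ i / \<alpha> $ i))"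
    if "\<And>i. y $ i - c \<le> x $ i" "0 \<le> c" for x y :: "real^'n" and c
  proof (rule min_shift)
    fix i
    have "c / \<alpha> $ i \<le> c / min_coord \<alpha>"
      using mle[of i] mpos that(2) by (intro divide_left_mono) auto
    moreover have "(y $ i - c) / \<alpha> $ i \<le> x $ i / \<alpha> $ i"
      using that(1)[of i] apos[of i] by (intro divide_right_mono) auto
    ultimately show "y $ i / \<alpha> $ i - c / min_coord \<alpha> \<le> x $ i / \<alpha> $ i"
      using apos[of i] by (simp add: diff_divide_distrib)
  qed
  have P1: "0 \<le> L_alpha \<alpha> x \<and> (L_alpha \<alpha> x = 0 \<longleftrightarrow> x = \<alpha>)" if x: "x \<in> prob_simplex" for x
  proof -
    have xsum: "(\<Sum>i\<in>UNIV. x $ i) = 1" using x unfolding prob_simplex_def by auto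
    define M where "M = Min (range (\<lambda>i. x $ i / \<alpha> $ i))"
    have Mle: "M \<le> x $ i / \<alpha> $ i" for i unfolding M_def by (intro Min_le) auto
    have M1: "M \<le> 1"
    proof (rule ccontr)
      assume "\<not> M \<le> 1"
      hence h: "1 * \<alpha> $ i < M * \<alpha> $ i" for i using apos[of i] by (intro mult_strict_right_mono) auto
      have "\<alpha> $ i < x $ i" for i
      proof -
        have "M * \<alpha> $ i \<le> x $ i" using Mle[of i] apos[of i] by (simp add: field_simps)
        with h[of i] show ?thesis by linarith
      qed
      hence "(\<Sum>i\<in>UNIV. \<alpha> $ i) < (\<Sum>i\<in>UNIV. x $ i)" by (intro sum_strict_mono) auto
      thus False using asum xsum by simp
    qed
    have eq: "M = 1 \<longleftrightarrow> x = \<alpha>"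
    proof
      assume "M = 1"
      hence ge: "\<alpha> $ i \<le> x $ i" for i using Mle[of i] apos[of i] by (auto simp: field_simps)
      have "(\<Sum>i\<in>UNIV. x $ i - \<alpha> $ i) = 0" using asum xsum by (simp add: sum_subtractf)
      hence "\<forall>i\<in>UNIV. x $ i - \<alpha> $ i = 0" using ge by (subst sum_nonneg_eq_0_iff[symmetric]) auto
      thus "x = \<alpha>" by (simp add: vec_eq_iff)
    next
      assume "x = \<alpha>"
      hence "range (\<lambda>i. x $ i / \<alpha> $ i) = {1}" using apos by (auto simp: image_def) (metis less_irrefl)
      thus "M = 1" unfolding M_def by simp
    qed
    show ?thesis using M1 eq unfolding L_alpha_def M_def[symmetric] by auto
  qed
  have P2: "\<bar>L_alpha \<alpha> x1 - L_alpha \<alpha> x2\<bar> \<le> infnorm (x1 - x2) / min_coord \<alpha>" for x1 x2 :: "real^'n"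
  proof -
    let ?c = "infnorm (x1 - x2)"
    have c0: "0 \<le> ?c" by (rule infnorm_pos_le)
    have d: "\<bar>x1 $ i - x2 $ i\<bar> \<le> ?c" for i
      using component_le_infnorm_cart[of "x1 - x2" i] by simp
    have "x2 $ i - ?c \<le> x1 $ i" for i using d[of i] by linarith
    note a = ratio_shift[OF this c0]
    have "x1 $ i - ?c \<le> x2 $ i" for i using d[of i] by linarith
    note b = ratio_shift[OF this c0]
    show ?thesis using a b unfolding L_alpha_def by linarith
  qed
  have P3: "D \<le> 1 / min_coord \<alpha>"
    if F: "is_FSP p cmp U T Abar Xbar" and t: "t \<in> {0<..<T}"
      and dv: "((\<lambda>s. L_alpha \<alpha> (Xbar s)) has_real_derivative D) (at t)"
    for p :: "('d::finite \<times> 'n) pmf" and cmp U T Abar Xbar t D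
  proof -
    let ?f = "\<lambda>s. L_alpha \<alpha> (Xbar s)"
    have "(?f has_real_derivative D) (at t within {t<..})" using dv by (rule has_field_derivative_at_within)
    hence lim: "((\<lambda>s. (?f s - ?f t) / (s - t)) \<longlongrightarrow> D) (at_right t)"
      by (simp add: has_field_derivative_iff)
    have ev: "\<forall>\<^sub>F s in at_right t. (?f s - ?f t) / (s - t) \<le> 1 / min_coord \<alpha>"
      unfolding eventually_at_right_field
    proof (intro exI conjI allI impI)
      show "t < T" using t by simp
      fix s assume s: "t < s" "s < T"
      have "Xbar t $ i - (s - t) \<le> Xbar s $ i" for i
        using FSP_mono[OF F] t s by auto
      hence R: "Min (range (\<lambda>i. Xbar t $ i / \<alpha> $ i)) - (s - t) / min_coord \<alpha> \<le> Min (range (\<lambda>i. Xbar s $ i / \<alpha> $ i))"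
        by (rule ratio_shift) (use s in auto)
      have "?f s - ?f t \<le> (s - t) / min_coord \<alpha>" using R unfolding L_alpha_def by linarith
      hence "(?f s - ?f t) / (s - t) \<le> ((s - t) / min_coord \<alpha>) / (s - t)"
        using s by (intro divide_right_mono) auto
      thus "(?f s - ?f t) / (s - t) \<le> 1 / min_coord \<alpha>" using s by simp
    qed
    show ?thesis by (rule tendsto_upperbound[OF lim ev trivial_limit_at_right_real])
  qed
  show ?thesis using P1 P2 P3 by blast
qed

end
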